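(* There exists $C>0$ such that for all $h\in(0,1]$ and all $0\le u<t\le T$, $$\big|g^{(h)}(t,u)-1\big|\le C\Big[\Big(\tfrac{h}{t-u}\Big)^{\alpha}\wedge1\Big]+C\,h\,K\big(h-\chi_h(u)\big)\Big[\Big(\tfrac{1}{t-u}\Big)^{\alpha}\wedge\Big(\tfrac1h\Big)^{\alpha}\Big].$$
   Context: Fix $T>0$ and $\alpha\in(1/2,1)$. Let $K(u)=\frac{u^{\alpha-1}}{\Gamma(\alpha)}\mathbf 1_{u>0}$ and $L(u)=\frac{u^{-\alpha}}{\Gamma(1-\alpha)}\mathbf 1_{u>0}$. For $h>0$ let $\varphi_h(t)=h\lfloor t/h\rfloor$ and $\chi_h(u)=u-\varphi_h(u)\in[0,h)$. Define $K^{(h)}(t,s)=K(\varphi_h(t)-s)\mathbf 1_{0\le s<\varphi_h(t)}$ and $g^{(h)}(t,s)=\int_s^tL(t-v)K^{(h)}(v,s)\,dv$ for $0\le s<t\le T$. *)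

theory Defs
  imports "HOL-Analysis.Analysis"
begin

definition Kker :: "real \<Rightarrow> real \<Rightarrow> real" where
  "Kker \<alpha> u = (if u > 0 then u powr (\<alpha> - 1) / Gamma \<alpha> else 0)"

definition Lker :: "real \<Rightarrow> real \<Rightarrow> real" where
  "Lker \<alpha> u = (if u > 0 then u powr (- \<alpha>) / Gamma (1 - \<alpha>) else 0)"

definition phi :: "real \<Rightarrow> real \<Rightarrow> real" where
  "phi h t = h * of_int \<lfloor>t / h\<rfloor>"

definition chi :: "real \<Rightarrow> real \<Rightarrow> real" where
  "chi h u = u - phi h u"

definition Kh :: "real \<Rightarrow> real \<Rightarrow> real \<Rightarrow> real \<Rightarrow> real" where
  "Kh \<alpha> h t s = (if 0 \<le> s \<and> s < phi h t then Kker \<alpha> (phi h t - s) else 0)"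

definition gh :: "real \<Rightarrow> real \<Rightarrow> real \<Rightarrow> real \<Rightarrow> real" where
  "gh \<alpha> h t s = (\<integral>v\<in>{s..t}. Lker \<alpha> (t - v) * Kh \<alpha> h v s \<partial>lborel)"

end

theory Submission
  imports Defs
begin
lemma deriv_pw:
  fixes g :: "real \<Rightarrow> real"
  assumes "DERIV g x :> m" "g x > 0"
  shows "DERIV (\<lambda>x. g x powr r / c) x :> r * g x powr (r-1) * m / c"
  using DERIV_cdivide[OF DERIV_fun_powr[OF assms, of r], of c] by simp

lemma P1:
  fixes t c b \<alpha> :: real
  assumes "0 < \<alpha>" "\<alpha> < 1" "c \<le> b" "b \<le> t"
  shows "((\<lambda>v. (t-v) powr (-\<alpha>)) has_integral ((t-c) powr (1-\<alpha>) - (t-b) powr (1-\<alpha>))/(1-\<alpha>)) {c..b}"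
proof -
  define F where "F = (\<lambda>v::real. (t-v) powr (1-\<alpha>)/(\<alpha>-1))"
  have "((\<lambda>v. (t-v) powr (-\<alpha>)) has_integral (F b - F c)) {c..b}"
  proof (rule fundamental_theorem_of_calculus_interior)
    show "continuous_on {c..b} F"
      unfolding F_def using assms by (intro continuous_intros continuous_on_powr') auto
    fix x assume x: "x \<in> {c<..<b}"
    have "DERIV (\<lambda>v. t - v) x :> -1" by (auto intro!: derivative_eq_intros)
    from deriv_pw[OF this, of "1-\<alpha>" "\<alpha>-1"] x assms
    have "DERIV F x :> (1-\<alpha>) * (t-x) powr (1-\<alpha>-1) * (-1) / (\<alpha>-1)" unfolding F_def by auto
    also have "(1-\<alpha>) * (t-x) powr (1-\<alpha>-1) * (-1) / (\<alpha>-1) = (t-x) powr (-\<alpha>)" using assms by (simp add: field_simps)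
    finally show "(F has_vector_derivative (t-x) powr (-\<alpha>)) (at x)"
      unfolding has_real_derivative_iff_has_vector_derivative[symmetric] .
  qed (use assms in auto)
  moreover have "F b - F c = ((t-c) powr (1-\<alpha>) - (t-b) powr (1-\<alpha>))/(1-\<alpha>)"
    using assms unfolding F_def by (simp add: divide_simps) (simp add: algebra_simps)
  ultimately show ?thesis by simp
qed

lemma P2:
  fixes u c b \<alpha> :: real
  assumes "0 < \<alpha>" "\<alpha> < 1" "c \<le> b" "u < c"
  shows "((\<lambda>v. (v-u) powr (\<alpha>-2)) has_integral ((c-u) powr (\<alpha>-1) - (b-u) powr (\<alpha>-1))/(1-\<alpha>)) {c..b}"
proof -
  define F where "F = (\<lambda>v::real. (v-u) powr (\<alpha>-1)/(\<alpha>-1))"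
  have "((\<lambda>v. (v-u) powr (\<alpha>-2)) has_integral (F b - F c)) {c..b}"
  proof (rule fundamental_theorem_of_calculus_interior)
    show "continuous_on {c..b} F"
      unfolding F_def using assms by (intro continuous_intros continuous_on_powr') auto
    fix x assume x: "x \<in> {c<..<b}"
    have "DERIV (\<lambda>v. v - u) x :> 1" by (auto intro!: derivative_eq_intros)
    from deriv_pw[OF this, of "\<alpha>-1" "\<alpha>-1"] x assms
    have "DERIV F x :> (\<alpha>-1) * (x-u) powr (\<alpha>-1-1) * 1 / (\<alpha>-1)" unfolding F_def by auto
    also have "(\<alpha>-1) * (x-u) powr (\<alpha>-1-1) * 1 / (\<alpha>-1) = (x-u) powr (\<alpha>-2)" using assms by (simp add: field_simps)
    finally show "(F has_vector_derivative (x-u) powr (\<alpha>-2)) (at x)"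
      unfolding has_real_derivative_iff_has_vector_derivative[symmetric] .
  qed (use assms in auto)
  moreover have "F b - F c = ((c-u) powr (\<alpha>-1) - (b-u) powr (\<alpha>-1))/(1-\<alpha>)"
    using assms unfolding F_def by (simp add: divide_simps) (simp add: algebra_simps)
  ultimately show ?thesis by simp
qed

lemma P3:
  fixes u b \<alpha> :: real
  assumes "0 < \<alpha>" "\<alpha> < 1" "u \<le> b"
  shows "((\<lambda>v. (v-u) powr (\<alpha>-1)) has_integral (b-u) powr \<alpha> / \<alpha>) {u..b}"
proof -
  define F where "F = (\<lambda>v::real. (v-u) powr \<alpha>/\<alpha>)"
  have "((\<lambda>v. (v-u) powr (\<alpha>-1)) has_integral (F b - F u)) {u..b}"
  proof (rule fundamental_theorem_of_calculus_interior)
    show "continuous_on {u..b} F"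
      unfolding F_def using assms by (intro continuous_intros continuous_on_powr') auto
    fix x assume x: "x \<in> {u<..<b}"
    have "DERIV (\<lambda>v. v - u) x :> 1" by (auto intro!: derivative_eq_intros)
    from deriv_pw[OF this, of "\<alpha>" "\<alpha>"] x assms
    have "DERIV F x :> \<alpha> * (x-u) powr (\<alpha>-1) * 1 / \<alpha>" unfolding F_def by auto
    also have "\<alpha> * (x-u) powr (\<alpha>-1) * 1 / \<alpha> = (x-u) powr (\<alpha>-1)" using assms by (simp add: field_simps)
    finally show "(F has_vector_derivative (x-u) powr (\<alpha>-1)) (at x)"
      unfolding has_real_derivative_iff_has_vector_derivative[symmetric] .
  qed (use assms in auto)
  then show ?thesis using assms by (simp add: F_def field_simps)
qed

lemma Beta_shift:
  fixes u t \<alpha> :: real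
  assumes "0 < \<alpha>" "\<alpha> < 1" "u < t"
  shows "((\<lambda>v. (v-u) powr (\<alpha>-1) * (t-v) powr (-\<alpha>)) has_integral Gamma \<alpha> * Gamma (1-\<alpha>)) {u..t}"
proof -
  define s where "s = t - u"
  have s: "s > 0" using assms s_def by auto
  have B: "((\<lambda>x. x powr (\<alpha>-1) * (1-x) powr (-\<alpha>)) has_integral Gamma \<alpha> * Gamma (1-\<alpha>)) (cbox 0 1)"
    using has_integral_Beta_real[of \<alpha> "1-\<alpha>"] assms by (simp add: Beta_def cbox_interval)
  have "((\<lambda>v. (\<lambda>x. x powr (\<alpha>-1) * (1-x) powr (-\<alpha>)) ((1/s) *\<^sub>R v + (-u/s))) has_integral
        ((Gamma \<alpha> * Gamma (1-\<alpha>)) /\<^sub>R (1/s) ^ DIM(real)))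
        (cbox ((0 - (-u/s)) /\<^sub>R (1/s)) ((1 - (-u/s)) /\<^sub>R (1/s)))"
    by (rule has_integral_affinity'[OF B]) (use s in auto)
  moreover have "cbox ((0 - (-u/s)) /\<^sub>R (1/s)) ((1 - (-u/s)) /\<^sub>R (1/s)) = {u..t}"
    using s by (simp add: cbox_interval s_def field_simps)
  ultimately have I: "((\<lambda>v. ((v-u)/s) powr (\<alpha>-1) * (1-(v-u)/s) powr (-\<alpha>)) has_integral
        s * (Gamma \<alpha> * Gamma (1-\<alpha>))) {u..t}"
    using s by (simp add: field_simps)
  have eq: "((v-u)/s) powr (\<alpha>-1) * (1-(v-u)/s) powr (-\<alpha>) = s * ((v-u) powr (\<alpha>-1) * (t-v) powr (-\<alpha>))"
    if "v \<in> {u..t}" for v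
  proof -
    have "1-(v-u)/s = (t-v)/s" using s by (simp add: s_def field_simps)
    hence "((v-u)/s) powr (\<alpha>-1) * (1-(v-u)/s) powr (-\<alpha>) = 
       (v-u) powr (\<alpha>-1) * (t-v) powr (-\<alpha>) / (s powr (\<alpha>-1) * s powr (-\<alpha>))"
      using that s by (simp add: powr_divide)
    also have "s powr (\<alpha>-1) * s powr (-\<alpha>) = 1/s"
      using s by (simp only: powr_add[symmetric]) (simp add: powr_minus_divide)
    finally show ?thesis using s by simp
  qed
  have "((\<lambda>v. s * ((v-u) powr (\<alpha>-1) * (t-v) powr (-\<alpha>))) has_integral s * (Gamma \<alpha> * Gamma (1-\<alpha>))) {u..t}"
    using has_integral_eq[OF _ I, of "\<lambda>v. s * ((v-u) powr (\<alpha>-1) * (t-v) powr (-\<alpha>))"] eq by auto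
  then show ?thesis
    using has_integral_cmul_iff[of s "\<lambda>v. (v-u) powr (\<alpha>-1) * (t-v) powr (-\<alpha>)"] s by simp
qed

lemma powdiff:
  fixes x h \<alpha> :: real
  assumes "0 < x" "0 \<le> h" "0 < \<alpha>" "\<alpha> < 1"
  shows "x powr (\<alpha>-1) - (x+h) powr (\<alpha>-1) \<le> h * x powr (\<alpha>-2)"
proof -
  define r where "r = h / x"
  have r: "r \<ge> 0" using assms r_def by simp
  have "x + h = x * (1 + r)" using assms r_def by (simp add: field_simps)
  hence e1: "(x+h) powr (\<alpha>-1) = x powr (\<alpha>-1) * (1+r) powr (\<alpha>-1)" by (simp add: powr_mult)
  have "(1+r) powr (-1) \<le> (1+r) powr (\<alpha>-1)" using assms r by (intro powr_mono) auto
  moreover have "(1+r) powr (-1) = 1/(1+r)" using r by (simp add: powr_neg_one)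
  moreover have "1 - r \<le> 1/(1+r)" using r by (simp add: field_simps)
  ultimately have "1 - r \<le> (1+r) powr (\<alpha>-1)" by linarith
  hence "x powr (\<alpha>-1) * (1 - r) \<le> (x+h) powr (\<alpha>-1)"
    unfolding e1 by (intro mult_left_mono) auto
  moreover have "x powr (\<alpha>-2) = x powr (\<alpha>-1) / x"
    using assms by (simp add: powr_diff power2_eq_square)
  then have "x powr (\<alpha>-1) * (1 - r) = x powr (\<alpha>-1) - h * x powr (\<alpha>-2)"
    using assms by (simp add: r_def algebra_simps)
  ultimately show ?thesis by linarith
qed

lemma min_le_powr:
  fixes x \<alpha> :: real
  assumes "0 < x" "0 < \<alpha>" "\<alpha> < 1"
  shows "min x 1 \<le> x powr \<alpha>"
proof (cases "x \<le> 1")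
  case True
  hence "x powr 1 \<le> x powr \<alpha>" using assms by (intro powr_mono') auto
  thus ?thesis using assms by simp
next
  case False
  thus ?thesis using ge_one_powr_ge_zero[of x \<alpha>] assms by simp
qed

lemma Kker_eq: "0 \<le> x \<Longrightarrow> Kker a x = x powr (a-1) / Gamma a"
  by (auto simp: Kker_def)
lemma Lker_eq: "0 \<le> x \<Longrightarrow> Lker a x = x powr (-a) / Gamma (1-a)"
  by (auto simp: Lker_def)

lemma Kker_nonneg: "0 < a \<Longrightarrow> 0 \<le> Kker a x"
  by (auto simp: Kker_def intro!: divide_nonneg_pos Gamma_real_pos)
lemma Lker_nonneg: "a < 1 \<Longrightarrow> 0 \<le> Lker a x"
  by (auto simp: Lker_def intro!: divide_nonneg_pos Gamma_real_pos)

lemma Kker_mono: 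
  assumes "0 < a" "a < 1" "0 < x" "x \<le> y" shows "Kker a y \<le> Kker a x"
proof -
  have "y powr (a-1) \<le> x powr (a-1)" using assms by (intro powr_mono2') auto
  moreover have "Gamma a > 0" using assms by (intro Gamma_real_pos)
  ultimately show ?thesis using assms unfolding Kker_def by (auto intro: divide_right_mono)
qed

lemma Kker_meas[measurable]: "Kker a \<in> borel_measurable borel"
  unfolding Kker_def by measurable
lemma Lker_meas[measurable]: "Lker a \<in> borel_measurable borel"
  unfolding Lker_def by measurable
lemma phi_meas[measurable]: "phi h \<in> borel_measurable borel"
  unfolding phi_def by measurable
lemma F_meas[measurable]: "(\<lambda>v. Lker a (t - v) * Kh a h v u) \<in> borel_measurable borel"
  unfolding Kh_def by measurable

lemma HK_to_lborel:
  fixes f :: "real \<Rightarrow> real"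
  assumes "f \<in> borel_measurable borel" "f integrable_on {a..b}" "\<And>x. x\<in>{a..b} \<Longrightarrow> 0 \<le> f x"
  shows "set_integrable lborel {a..b} f"
proof -
  have "f absolutely_integrable_on {a..b}"
    by (rule nonnegative_absolutely_integrable_1) (use assms in auto)
  then have "integrable lebesgue (\<lambda>x. indicator {a..b} x *\<^sub>R f x)" by (simp add: set_integrable_def)
  then show ?thesis unfolding set_integrable_def
    by (subst (asm) integrable_completion) (use assms in auto)
qed

lemma grid:
  fixes h u :: real
  assumes "0 < h"
  defines "k \<equiv> \<lfloor>u/h\<rfloor>"
  shows "phi h u = h * k" "h * k \<le> u" "u < h * (k+1)"
    "\<And>v. v < h*(k+1) \<Longrightarrow> phi h v \<le> u"
    "\<And>v. h*(k+1) \<le> v \<Longrightarrow> h*(k+1) \<le> phi h v \<and> phi h v \<le> v \<and> v < phi h v + h"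
    "\<And>v. h*(k+1) \<le> v \<Longrightarrow> v < h*(k+1) + h \<Longrightarrow> phi h v = h*(k+1)"
    "\<And>v. h*(k+1) + h \<le> v \<Longrightarrow> h*(k+1) + h \<le> phi h v"
    "chi h u = u - h*k"
proof -
  have k1: "k \<le> u/h" "u/h < k + 1" unfolding k_def by linarith+
  show "phi h u = h * k" by (simp add: phi_def k_def)
  have "h * k \<le> h * (u/h)" using k1 assms by (intro mult_left_mono) auto
  then show hk: "h * k \<le> u" using assms by simp
  show "u < h * (k+1)" using k1 assms by (simp add: field_simps)
  show "chi h u = u - h*k" by (simp add: chi_def phi_def k_def)
  fix v
  have f1: "\<lfloor>v/h\<rfloor> \<le> v/h" "v/h < \<lfloor>v/h\<rfloor> + 1" by linarith+
  have pv: "phi h v = h * \<lfloor>v/h\<rfloor>" by (simp add: phi_def)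
  { assume "v < h*(k+1)"
    hence "v/h < k+1" using assms by (simp add: field_simps)
    hence "\<lfloor>v/h\<rfloor> \<le> k" by linarith
    hence "h * \<lfloor>v/h\<rfloor> \<le> h * k" using assms by simp
    thus "phi h v \<le> u" using pv hk by linarith }
  { assume a: "h*(k+1) \<le> v"
    hence "k+1 \<le> v/h" using assms by (simp add: field_simps)
    hence "k+1 \<le> \<lfloor>v/h\<rfloor>" by linarith
    hence "h*(k+1) \<le> h * \<lfloor>v/h\<rfloor>" using assms by (intro mult_left_mono) auto
    moreover have "h * \<lfloor>v/h\<rfloor> \<le> h * (v/h)" using f1 assms by (intro mult_left_mono) auto
    moreover have "v < h * \<lfloor>v/h\<rfloor> + h" using f1 assms by (simp_all add: field_simps)
    ultimately show "h*(k+1) \<le> phi h v \<and> phi h v \<le> v \<and> v < phi h v + h" using pv assms by simp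
    assume "v < h*(k+1) + h"
    hence "v/h < k+2" using assms by (simp add: field_simps)
    with \<open>k+1 \<le> v/h\<close> have "\<lfloor>v/h\<rfloor> = k+1" by linarith
    thus "phi h v = h*(k+1)" using pv by simp }
  { assume a: "h*(k+1) + h \<le> v"
    hence "k+2 \<le> v/h" using assms by (simp add: field_simps)
    hence "k+2 \<le> \<lfloor>v/h\<rfloor>" by linarith
    hence "h*(k+2) \<le> h * \<lfloor>v/h\<rfloor>" using assms by (intro mult_left_mono) auto
    thus "h*(k+1) + h \<le> phi h v" using pv by (simp add: algebra_simps) }
qed

lemma half_bound:
  fixes s y \<beta> n :: real
  assumes "0 < s" "s/2 \<le> y" "0 \<le> \<beta>" "\<beta> \<le> n"
  shows "y powr (-\<beta>) \<le> 2 powr n * s powr (-\<beta>)"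
proof -
  have "y powr (-\<beta>) \<le> (s/2) powr (-\<beta>)" using assms by (intro powr_mono2') auto
  also have "(s/2) powr (-\<beta>) = 2 powr \<beta> * s powr (-\<beta>)"
    by (simp add: powr_divide powr_minus_divide)
  also have "2 powr \<beta> \<le> 2 powr n" using assms by (intro powr_mono) auto
  hence "2 powr \<beta> * s powr (-\<beta>) \<le> 2 powr n * s powr (-\<beta>)" by (intro mult_right_mono) auto
  finally show ?thesis .
qed


lemma main_bound:
  fixes \<alpha> h u t :: real
  assumes a0: "0 < \<alpha>" and a1: "\<alpha> < 1" and h0: "0 < h" and u0: "0 \<le> u" and ut: "u < t"
  defines "Ga \<equiv> Gamma \<alpha>" and "Gb \<equiv> Gamma (1-\<alpha>)"
  defines "C0 \<equiv> 4 + 4/((1-\<alpha>)*Gb) + 2/Gb + 2/(\<alpha>*Ga*Gb) + 24/((1-\<alpha>)*Ga*Gb)"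
  shows "\<bar>gh \<alpha> h t u - 1\<bar> \<le> C0 * min ((h/(t-u)) powr \<alpha>) 1
            + C0 * h * Kker \<alpha> (h - chi h u) * min ((1/(t-u)) powr \<alpha>) ((1/h) powr \<alpha>)"
proof -
  have Ga: "Ga > 0" unfolding Ga_def using a0 by (intro Gamma_real_pos)
  have Gb: "Gb > 0" unfolding Gb_def using a1 by (intro Gamma_real_pos) simp
  define k where "k = \<lfloor>u/h\<rfloor>"
  define a where "a = h * (k+1)"
  define d where "d = a - u"
  define s where "s = t - u"
  define Kd where "Kd = Kker \<alpha> d"
  note g = grid[OF h0, where u=u, folded k_def, folded a_def]
  have ua: "u < a" and d0: "0 < d" and dh: "d \<le> h" using g(2,3) by (auto simp: d_def a_def algebra_simps)
  have s0: "s > 0" using ut s_def by simp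
  have chid: "h - chi h u = d" using g(8) by (simp add: d_def a_def algebra_simps)
  have Kd0: "Kd \<ge> 0" unfolding Kd_def using a0 by (rule Kker_nonneg)
  have Khlt: "Kh \<alpha> h v u = 0" if "v < a" for v
    using g(4)[OF that] by (auto simp: Kh_def)
  have Khge: "Kh \<alpha> h v u = Kker \<alpha> (phi h v - u)" if "a \<le> v" for v
    using g(5)[OF that] ua u0 by (auto simp: Kh_def)
  define Lf where "Lf = (\<lambda>v. Lker \<alpha> (t - v))"
  define F where "F = (\<lambda>v. Lker \<alpha> (t - v) * Kh \<alpha> h v u)"
  define e where "e = (\<lambda>v. Lker \<alpha> (t - v) * Kker \<alpha> (v - u))"
  have Lf_eq: "Lf v = (t-v) powr (-\<alpha>) / Gb" if "v \<le> t" for v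
    using that by (simp add: Lf_def Lker_eq Gb_def)
  have Lf0: "Lf v \<ge> 0" for v unfolding Lf_def using a1 by (rule Lker_nonneg)
  have Fb: "0 \<le> F v \<and> F v \<le> Kd * Lf v" if "v \<in> {u..t}" for v
  proof (cases "v < a")
    case True thus ?thesis using Khlt[OF True] Kd0 Lf0 by (simp add: F_def Lf_def)
  next
    case False
    hence av: "a \<le> v" by simp
    have "Kker \<alpha> (phi h v - u) \<le> Kd" unfolding Kd_def
      using g(5)[OF av] a0 a1 d0 by (intro Kker_mono) (auto simp: d_def)
    moreover have "0 \<le> Kker \<alpha> (phi h v - u)" using a0 by (rule Kker_nonneg)
    moreover have "Lf v * Kker \<alpha> (phi h v - u) \<le> Lf v * Kd"
      using calculation Lf0[of v] by (intro mult_left_mono) auto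
    ultimately show ?thesis using Khge[OF av] Lf0[of v]
      by (auto simp: F_def Lf_def mult.commute)
  qed
  have Lf_int: "(Lf has_integral s powr (1-\<alpha>) / ((1-\<alpha>)*Gb)) {u..t}"
  proof -
    have P: "((\<lambda>v. (t-v) powr (-\<alpha>)) has_integral ((t-u) powr (1-\<alpha>) - (t-t) powr (1-\<alpha>))/(1-\<alpha>)) {u..t}"
      by (rule P1[OF a0 a1]) (use ut in auto)
    have "((t-u) powr (1-\<alpha>) - (t-t) powr (1-\<alpha>))/(1-\<alpha>) = s powr (1-\<alpha>)/(1-\<alpha>)"
      by (simp add: s_def)
    with P have P': "((\<lambda>v. (t-v) powr (-\<alpha>)) has_integral s powr (1-\<alpha>)/(1-\<alpha>)) {u..t}" by (simp add: s_def)
    have Q: "((\<lambda>v. (t-v) powr (-\<alpha>) * (1/Gb)) has_integral (s powr (1-\<alpha>)/(1-\<alpha>)) * (1/Gb)) {u..t}"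
      by (rule has_integral_mult_left[OF P'])
    have "(t-v) powr (-\<alpha>) * (1/Gb) = Lf v" if "v \<in> {u..t}" for v
      using Lf_eq[of v] that by simp
    from has_integral_eq[OF this Q] show ?thesis by simp
  qed
  have Lf_meas: "Lf \<in> borel_measurable borel" unfolding Lf_def by measurable
  have KLf_int: "((\<lambda>v. Kd * Lf v) has_integral Kd * (s powr (1-\<alpha>) / ((1-\<alpha>)*Gb))) {u..t}"
    by (rule has_integral_mult_right[OF Lf_int])
  have KLf_set: "set_integrable lborel {u..t} (\<lambda>v. Kd * Lf v)"
    by (rule HK_to_lborel) (use KLf_int Kd0 Lf0 Lf_meas in \<open>auto simp: integrable_on_def\<close>)
  have F_set: "set_integrable lborel {u..t} F"
  proof (rule set_integrable_bound[OF KLf_set])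
    show "set_borel_measurable lborel {u..t} F" unfolding set_borel_measurable_def F_def by measurable
    show "AE x in lborel. x \<in> {u..t} \<longrightarrow> norm (F x) \<le> norm (Kd * Lf x)"
    proof (intro AE_I2 impI)
      fix x assume x: "x \<in> {u..t}"
      have "F x \<le> Kd * Lf x" "0 \<le> F x" using Fb[OF x] by auto
      moreover have "0 \<le> Kd * Lf x" using Kd0 Lf0[of x] by simp
      ultimately show "norm (F x) \<le> norm (Kd * Lf x)" by simp
    qed
  qed
  have gh_eq: "gh \<alpha> h t u = integral {u..t} F" and F_int: "F integrable_on {u..t}"
    using set_borel_integral_eq_integral[OF F_set] by (simp_all add: gh_def F_def)
  have p1: "4/((1-\<alpha>)*Gb) > 0" using Gb a1 by simp
  have p2: "2/Gb > 0" using Gb by simp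
  have p3: "2/(\<alpha>*Ga*Gb) > 0" using Ga Gb a0 by simp
  have p4: "24/((1-\<alpha>)*Ga*Gb) > 0" using Ga Gb a1 by simp
  have C0: "C0 \<ge> 4" "C0 \<ge> 4/((1-\<alpha>)*Gb)" "C0 \<ge> 2/Gb + 2/(\<alpha>*Ga*Gb) + 24/((1-\<alpha>)*Ga*Gb)"
    "C0 \<ge> 2/(\<alpha>*Ga*Gb) + 24/((1-\<alpha>)*Ga*Gb)" "C0 \<ge> 2/Gb"
    using p1 p2 p3 p4 unfolding C0_def by linarith+
  define m1 where "m1 = min ((h/s) powr \<alpha>) 1"
  define m2 where "m2 = min ((1/s) powr \<alpha>) ((1/h) powr \<alpha>)"
  have m1: "0 \<le> m1" unfolding m1_def by simp
  have m2: "0 \<le> m2" unfolding m2_def by simp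
  have rhs2: "0 \<le> C0 * h * Kd * m2" using C0 h0 Kd0 m2 by simp
  have goal: "\<bar>integral {u..t} F - 1\<bar> \<le> C0 * m1 + C0 * h * Kd * m2"
  proof (cases "t \<le> a")
    case True
    have "F v = 0" if "v \<in> {u..t}" for v
    proof (cases "v < a")
      case True thus ?thesis by (simp add: F_def Khlt)
    next
      case False thus ?thesis using that \<open>t \<le> a\<close> by (simp add: F_def Lker_def)
    qed
    hence "integral {u..t} F = integral {u..t} (\<lambda>v. 0)" by (intro integral_cong) auto
    hence I0: "integral {u..t} F = 0" by simp
    have "1 \<le> h/s" using True dh s0 by (simp add: s_def d_def field_simps)
    hence "1 \<le> (h/s) powr \<alpha>" using a0 by (intro ge_one_powr_ge_zero) auto
    hence "m1 = 1" by (simp add: m1_def)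
    thus ?thesis using I0 C0 rhs2 by simp
  next
    case False
    hence at: "a < t" by simp
    show ?thesis
    proof (cases "s \<le> 4*h")
      case True
      have I_nonneg: "0 \<le> integral {u..t} F" using Fb F_int by (intro integral_nonneg) auto
      have "integral {u..t} F \<le> integral {u..t} (\<lambda>v. Kd * Lf v)"
        using Fb F_int KLf_int by (intro integral_le) (auto simp: integrable_on_def)
      also have "\<dots> = Kd * (s powr (1-\<alpha>) / ((1-\<alpha>)*Gb))"
        using KLf_int by (rule integral_unique)
      finally have I_le: "integral {u..t} F \<le> Kd * (s powr (1-\<alpha>) / ((1-\<alpha>)*Gb))" .
      have "min (h/s) 1 \<le> (h/s) powr \<alpha>" using a0 a1 h0 s0 by (intro min_le_powr) auto
      moreover have "1/4 \<le> min (h/s) 1" using True s0 by (auto simp: field_simps)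
      ultimately have m1b: "1 \<le> 4 * m1" unfolding m1_def by linarith
      have isp: "(1/x) powr \<alpha> = 1 / x powr \<alpha>" if "x > 0" for x :: real
        by (simp add: powr_divide)
      have sp: "s powr (1-\<alpha>) = s * (1/s) powr \<alpha>" using s0 by (simp add: isp powr_diff)
      have hp: "h powr (1-\<alpha>) = h * (1/h) powr \<alpha>" using h0 by (simp add: isp powr_diff)
      have b1: "s powr (1-\<alpha>) \<le> 4*h * (1/s) powr \<alpha>" unfolding sp
        using True by (intro mult_right_mono) auto
      have "s powr (1-\<alpha>) \<le> (4*h) powr (1-\<alpha>)" using True s0 a1 by (intro powr_mono2) auto
      also have "\<dots> = 4 powr (1-\<alpha>) * h powr (1-\<alpha>)" by (simp add: powr_mult)
      also have "4 powr (1-\<alpha>) \<le> 4 powr 1" using a0 by (intro powr_mono) auto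
      hence "4 powr (1-\<alpha>) * h powr (1-\<alpha>) \<le> 4 * h powr (1-\<alpha>)" by (intro mult_right_mono) auto
      finally have b2: "s powr (1-\<alpha>) \<le> 4*h * (1/h) powr \<alpha>" unfolding hp by simp
      have sm: "s powr (1-\<alpha>) \<le> 4*h*m2" using b1 b2 unfolding m2_def by simp
      have "Kd * (s powr (1-\<alpha>) / ((1-\<alpha>)*Gb)) \<le> Kd * (4*h*m2 / ((1-\<alpha>)*Gb))"
        using sm Kd0 Gb a1 by (intro mult_left_mono divide_right_mono) auto
      also have "\<dots> = (4/((1-\<alpha>)*Gb)) * h * Kd * m2" by simp
      also have "\<dots> \<le> C0 * h * Kd * m2" using C0(2) h0 Kd0 m2 by (intro mult_right_mono) auto
      finally have "integral {u..t} F \<le> C0 * h * Kd * m2" using I_le by linarith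
      moreover have "1 \<le> C0 * m1" by (rule order_trans[OF m1b mult_right_mono[OF C0(1) m1]])
      ultimately show ?thesis using I_nonneg by linarith
    next
      case False
      hence s4: "4*h < s" by simp
      have ahT: "a + h < t" using s4 dh h0 by (simp add: s_def d_def)
      define S where "S = s powr \<alpha>"
      define H where "H = h powr \<alpha>"
      have S0: "S > 0" using s0 by (simp add: S_def)
      have H0: "H > 0" using h0 by (simp add: H_def)
      have sS: "s powr (-\<alpha>) = 1/S" by (simp add: S_def powr_minus_divide)
      have HS: "H \<le> S" unfolding H_def S_def using s4 h0 a0 by (intro powr_mono2) auto
      have hs1: "h/s \<le> 1" using s4 s0 by simp
      have hsHS: "(h/s) powr \<alpha> = H/S" by (simp add: H_def S_def powr_divide)
      have hs_le: "h/s \<le> H/S"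
      proof -
        have "min (h/s) 1 \<le> (h/s) powr \<alpha>" using a0 a1 h0 s0 by (intro min_le_powr) auto
        thus ?thesis using hs1 hsHS by simp
      qed
      have m1e: "m1 = H/S" using hsHS HS S0 by (simp add: m1_def)
      have m2e: "m2 = 1/S"
      proof -
        have "(1/s) powr \<alpha> = 1/S" "(1/h) powr \<alpha> = 1/H" by (simp_all add: S_def H_def powr_divide)
        moreover have "1/S \<le> 1/H" using HS H0 by (simp add: field_simps)
        ultimately show ?thesis by (simp add: m2_def)
      qed
      have e_eq: "e v = (v-u) powr (\<alpha>-1) * (t-v) powr (-\<alpha>) * (1/(Ga*Gb))" if "v \<in> {u..t}" for v
        using that by (simp add: e_def Lker_eq Kker_eq Ga_def Gb_def mult_ac)
      have e_int: "(e has_integral 1) {u..t}"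
      proof -
        have "((\<lambda>v. (v-u) powr (\<alpha>-1) * (t-v) powr (-\<alpha>) * (1/(Ga*Gb))) has_integral (Ga*Gb) * (1/(Ga*Gb))) {u..t}"
          unfolding Ga_def Gb_def by (rule has_integral_mult_left[OF Beta_shift[OF a0 a1 ut]])
        hence "((\<lambda>v. (v-u) powr (\<alpha>-1) * (t-v) powr (-\<alpha>) * (1/(Ga*Gb))) has_integral 1) {u..t}"
          using Ga Gb by simp
        thus ?thesis by (rule has_integral_eq[rotated]) (simp add: e_eq)
      qed
      have e_K: "e v = Lf v * Kker \<alpha> (v-u)" for v by (simp add: e_def Lf_def)
      have F_K: "F v = Lf v * Kker \<alpha> (phi h v - u)" if "a \<le> v" for v
        using Khge[OF that] by (simp add: F_def Lf_def)
      define D where "D = (\<lambda>v. F v - e v)"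
      have D_int: "D integrable_on {u..t}" unfolding D_def
        using F_int e_int by (intro integrable_diff) (auto simp: integrable_on_def)
      have ID: "integral {u..t} F - 1 = integral {u..t} D"
        unfolding D_def using F_int e_int
        by (subst integral_diff) (auto simp: integrable_on_def integral_unique)
      have split: "integral {u..t} D = integral {u..a} D + integral {a..a+h} D + integral {a+h..t} D"
      proof -
        have "integral {u..a} D + integral {a..t} D = integral {u..t} D"
          by (rule Henstock_Kurzweil_Integration.integral_combine) (use ua at D_int in auto)
        moreover have "integral {a..a+h} D + integral {a+h..t} D = integral {a..t} D"
          by (rule Henstock_Kurzweil_Integration.integral_combine, use ahT h0 in simp, use ahT in simp,
              rule integrable_on_subinterval[OF D_int]) (use ua in auto)
        ultimately show ?thesis by simp
      qed
      define A1 where "A1 = 2/(Ga*Gb*S)"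
      have A1: "A1 \<ge> 0" using Ga Gb S0 by (simp add: A1_def)
      have b1_int: "((\<lambda>v. A1 * (v-u) powr (\<alpha>-1)) has_integral A1 * (d powr \<alpha> / \<alpha>)) {u..a}"
        using has_integral_mult_right[OF P3[OF a0 a1, of u a]] ua by (simp add: d_def)
      have p1b: "norm (D v) \<le> A1 * (v-u) powr (\<alpha>-1)" if v: "v \<in> {u..a}" for v
      proof (cases "v < a")
        case True
        have Fv: "F v = 0" using Khlt[OF True] by (simp add: F_def)
        have "s/2 \<le> t - v" using True s4 dh h0 by (simp add: s_def d_def)
        hence tv: "(t-v) powr (-\<alpha>) \<le> 2 powr 1 * s powr (-\<alpha>)" using s0 a0 a1 by (intro half_bound) auto
        have ev: "e v = (t-v) powr (-\<alpha>) * ((v-u) powr (\<alpha>-1) * (1/(Ga*Gb)))"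
          using e_eq[of v] v at by simp
        have "e v \<le> (2 * (1/S)) * ((v-u) powr (\<alpha>-1) * (1/(Ga*Gb)))"
          unfolding ev using tv sS Ga Gb by (intro mult_right_mono) auto
        also have "\<dots> = A1 * (v-u) powr (\<alpha>-1)" by (simp add: A1_def)
        finally have "e v \<le> A1 * (v-u) powr (\<alpha>-1)" .
        moreover have "0 \<le> e v" unfolding ev using Ga Gb by simp
        ultimately show ?thesis using Fv by (simp add: D_def)
      next
        case False
        hence va: "v = a" using v by simp
        have "phi h a = a" using g(6)[of a] h0 by (simp add: a_def)
        hence "D v = 0" using va F_K[of a] e_K[of a] by (simp add: D_def)
        thus ?thesis using A1 by simp
      qed
      have I1: "\<bar>integral {u..a} D\<bar> \<le> (2/(\<alpha>*Ga*Gb)) * (H/S)"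
      proof -
        have "norm (integral {u..a} D) \<le> integral {u..a} (\<lambda>v. A1 * (v-u) powr (\<alpha>-1))"
          using p1b b1_int by (intro integral_norm_bound_integral integrable_on_subinterval[OF D_int])
             (auto simp: integrable_on_def less_imp_le[OF at])
        also have "\<dots> = A1 * (d powr \<alpha> / \<alpha>)" using b1_int by (rule integral_unique)
        also have "\<dots> \<le> A1 * (H / \<alpha>)" unfolding H_def
          using A1 d0 dh a0 by (intro mult_left_mono divide_right_mono powr_mono2) auto
        also have "\<dots> = (2/(\<alpha>*Ga*Gb)) * (H/S)" by (simp add: A1_def)
        finally show ?thesis by simp
      qed
      define B2 where "B2 = Kd * (2/(Gb*S))"
      have p2b: "norm (D v) \<le> B2" if v: "v \<in> {a..a+h}" for v
      proof -
        have av: "a \<le> v" using v by simp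
        have pv: "a \<le> phi h v" "phi h v \<le> v" using g(5)[OF av] by (auto simp: a_def)
        have K1: "Kker \<alpha> (v-u) \<le> Kker \<alpha> (phi h v - u)" using pv ua a0 a1 by (intro Kker_mono) auto
        have K2: "Kker \<alpha> (phi h v - u) \<le> Kd" unfolding Kd_def using pv a0 a1 d0 by (intro Kker_mono) (auto simp: d_def)
        have K0: "0 \<le> Kker \<alpha> (v-u)" using a0 by (rule Kker_nonneg)
        have "e v \<le> F v" unfolding e_K F_K[OF av] using K1 Lf0[of v] by (intro mult_left_mono) auto
        moreover have "0 \<le> e v" unfolding e_K using K0 Lf0[of v] by simp
        moreover have "F v \<le> Lf v * Kd" unfolding F_K[OF av] using K2 Lf0[of v] by (intro mult_left_mono) auto
        moreover have "Lf v \<le> 2/(Gb*S)"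
        proof -
          have "s/2 \<le> t - v" using v s4 dh h0 by (simp add: s_def d_def)
          hence tv: "(t-v) powr (-\<alpha>) \<le> 2 powr 1 * s powr (-\<alpha>)" using s0 a0 a1 by (intro half_bound) auto
          have "Lf v = (t-v) powr (-\<alpha>) / Gb" using Lf_eq[of v] v ahT by simp
          also have "\<dots> \<le> (2/S) / Gb" using tv sS Gb by (intro divide_right_mono) auto
          finally show ?thesis by (simp add: mult.commute)
        qed
        hence "Lf v * Kd \<le> 2/(Gb*S) * Kd" using Kd0 by (intro mult_right_mono) auto
        ultimately show ?thesis by (simp add: D_def B2_def mult.commute)
      qed
      have I2: "\<bar>integral {a..a+h} D\<bar> \<le> (2/Gb) * h * Kd * (1/S)"
      proof -
        have "norm (integral {a..a+h} D) \<le> integral {a..a+h} (\<lambda>v. B2)"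
          using p2b ahT ua h0 by (intro integral_norm_bound_integral integrable_on_subinterval[OF D_int]) auto
        also have "\<dots> = h * B2" using h0 by simp
        also have "\<dots> = (2/Gb) * h * Kd * (1/S)" by (simp add: B2_def)
        finally show ?thesis by simp
      qed
      define A3 where "A3 = 4*h/(Ga*Gb)"
      have A3: "A3 \<ge> 0" using Ga Gb h0 by (simp add: A3_def)
      define b3 where "b3 = (\<lambda>v. A3 * (4 * s powr (\<alpha>-2) * (t-v) powr (-\<alpha>) + (2/S) * (v-u) powr (\<alpha>-2)))"
      define I3 where "I3 = ((t-(a+h)) powr (1-\<alpha>) - (t-t) powr (1-\<alpha>))/(1-\<alpha>)"
      define I4 where "I4 = ((a+h-u) powr (\<alpha>-1) - (t-u) powr (\<alpha>-1))/(1-\<alpha>)"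
      have b3_int: "(b3 has_integral A3 * (4 * s powr (\<alpha>-2) * I3 + (2/S) * I4)) {a+h..t}"
      proof -
        have i3: "((\<lambda>v. (t-v) powr (-\<alpha>)) has_integral I3) {a+h..t}"
          unfolding I3_def by (rule P1[OF a0 a1]) (use ahT in auto)
        have i4: "((\<lambda>v. (v-u) powr (\<alpha>-2)) has_integral I4) {a+h..t}"
          unfolding I4_def by (rule P2[OF a0 a1]) (use ahT ua h0 in auto)
        show ?thesis unfolding b3_def
          by (intro has_integral_mult_right has_integral_add i3 i4)
      qed
      have p3b: "norm (D v) \<le> b3 v" if v: "v \<in> {a+h..t}" for v
      proof -
        define p where "p = phi h v"
        define x where "x = p - u"
        have av: "a \<le> v" using v h0 by simp
        have pv: "a + h \<le> p" "p \<le> v" "v < p + h" using g(7)[of v] g(5)[OF av] v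
          by (auto simp: p_def a_def)
        have xh: "h \<le> x" using pv ua by (simp add: x_def)
        have x0: "0 < x" using xh h0 by simp
        have vu0: "0 < v - u" using pv xh h0 by (simp add: x_def)
        have K1: "Kker \<alpha> (v-u) \<le> Kker \<alpha> x" using pv x0 a0 a1 by (intro Kker_mono) (auto simp: x_def)
        have K2: "Kker \<alpha> (x+h) \<le> Kker \<alpha> (v-u)" using pv vu0 a0 a1 by (intro Kker_mono) (auto simp: x_def)
        have "Kker \<alpha> x - Kker \<alpha> (x+h) = (x powr (\<alpha>-1) - (x+h) powr (\<alpha>-1)) / Ga"
          using x0 h0 by (simp add: Kker_eq Ga_def diff_divide_distrib)
        also have "\<dots> \<le> (h * x powr (\<alpha>-2)) / Ga"
          using powdiff[OF x0 _ a0 a1, of h] h0 Ga by (intro divide_right_mono) auto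
        also have "x powr (\<alpha>-2) \<le> 2 powr 2 * (v-u) powr (\<alpha>-2)"
        proof -
          have "(v-u)/2 \<le> x" using pv xh by (simp add: x_def)
          from half_bound[OF vu0 this, of "2-\<alpha>" 2] a0 a1
          show ?thesis by simp
        qed
        hence "(h * x powr (\<alpha>-2)) / Ga \<le> (h * (4 * (v-u) powr (\<alpha>-2))) / Ga"
          using h0 Ga by (intro divide_right_mono mult_left_mono) auto
        finally have Kdiff: "Kker \<alpha> x - Kker \<alpha> (v-u) \<le> h * (4 * (v-u) powr (\<alpha>-2)) / Ga"
          using K2 by linarith
        have Dv: "D v = Lf v * (Kker \<alpha> x - Kker \<alpha> (v-u))"
          unfolding D_def F_K[OF av] e_K by (simp add: x_def p_def algebra_simps)
        have D0: "0 \<le> D v" unfolding Dv using K1 Lf0[of v] by simp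
        have Lfv: "Lf v = (t-v) powr (-\<alpha>) / Gb" using Lf_eq[of v] v by simp
        have "D v \<le> Lf v * (h * (4 * (v-u) powr (\<alpha>-2)) / Ga)"
          unfolding Dv using Kdiff Lf0[of v] by (intro mult_left_mono) auto
        also have "\<dots> = A3 * ((t-v) powr (-\<alpha>) * (v-u) powr (\<alpha>-2))"
          unfolding Lfv A3_def by (simp add: field_simps)
        also have "(t-v) powr (-\<alpha>) * (v-u) powr (\<alpha>-2) \<le>
                   4 * s powr (\<alpha>-2) * (t-v) powr (-\<alpha>) + (2/S) * (v-u) powr (\<alpha>-2)"
        proof (cases "s/2 \<le> v - u")
          case True
          have "(v-u) powr (-(2-\<alpha>)) \<le> 2 powr 2 * s powr (-(2-\<alpha>))"
            by (rule half_bound[OF s0 True]) (use a0 a1 in auto)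
          hence "(v-u) powr (\<alpha>-2) \<le> 4 * s powr (\<alpha>-2)" by simp
          hence "(t-v) powr (-\<alpha>) * (v-u) powr (\<alpha>-2) \<le> (t-v) powr (-\<alpha>) * (4 * s powr (\<alpha>-2))"
            by (intro mult_left_mono) auto
          moreover have "0 \<le> (2/S) * (v-u) powr (\<alpha>-2)" using S0 by simp
          ultimately show ?thesis by (simp add: mult_ac)
        next
          case False
          hence "s/2 \<le> t - v" by (simp add: s_def)
          hence "(t-v) powr (-\<alpha>) \<le> 2 powr 1 * s powr (-\<alpha>)"
            by (intro half_bound[OF s0]) (use a0 a1 in auto)
          hence "(t-v) powr (-\<alpha>) \<le> 2/S" using sS by simp
          hence "(t-v) powr (-\<alpha>) * (v-u) powr (\<alpha>-2) \<le> (2/S) * (v-u) powr (\<alpha>-2)"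
            by (intro mult_right_mono) auto
          moreover have "0 \<le> 4 * s powr (\<alpha>-2) * (t-v) powr (-\<alpha>)" by simp
          ultimately show ?thesis by linarith
        qed
        hence "A3 * ((t-v) powr (-\<alpha>) * (v-u) powr (\<alpha>-2)) \<le> b3 v"
          unfolding b3_def using A3 by (intro mult_left_mono) auto
        finally show ?thesis using D0 by simp
      qed
      have I3b: "I3 \<le> s powr (1-\<alpha>)/(1-\<alpha>)"
      proof -
        have "(t-(a+h)) powr (1-\<alpha>) \<le> s powr (1-\<alpha>)" using ahT ua a1 h0 by (intro powr_mono2) (auto simp: s_def)
        thus ?thesis unfolding I3_def using a1 by (intro divide_right_mono) auto
      qed
      have I4b: "I4 \<le> h powr (\<alpha>-1)/(1-\<alpha>)"
      proof -
        have "(a+h-u) powr (\<alpha>-1) \<le> h powr (\<alpha>-1)" using d0 h0 a1 by (intro powr_mono2') (auto simp: d_def)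
        moreover have "0 \<le> (t-u) powr (\<alpha>-1)" by simp
        ultimately have "(a+h-u) powr (\<alpha>-1) - (t-u) powr (\<alpha>-1) \<le> h powr (\<alpha>-1)" by linarith
        thus ?thesis unfolding I4_def using a1 by (intro divide_right_mono) auto
      qed
      have I3': "s powr (\<alpha>-2) * I3 \<le> (1/s)/(1-\<alpha>)"
      proof -
        have "s powr (\<alpha>-2) * I3 \<le> s powr (\<alpha>-2) * (s powr (1-\<alpha>)/(1-\<alpha>))"
          using I3b by (intro mult_left_mono) auto
        also have "s powr (\<alpha>-2) * s powr (1-\<alpha>) = s powr (-1)" using s0 by (simp add: powr_add[symmetric])
        hence "s powr (\<alpha>-2) * (s powr (1-\<alpha>)/(1-\<alpha>)) = (1/s)/(1-\<alpha>)" using s0 by (simp add: powr_neg_one)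
        finally show ?thesis .
      qed
      have I4': "h * ((2/S) * I4) \<le> 2 * (H/S)/(1-\<alpha>)"
      proof -
        have "h * ((2/S) * I4) \<le> h * ((2/S) * (h powr (\<alpha>-1)/(1-\<alpha>)))"
          using I4b h0 S0 by (intro mult_left_mono) auto
        also have "h * h powr (\<alpha>-1) = H" using h0 by (simp add: H_def powr_diff)
        hence "h * ((2/S) * (h powr (\<alpha>-1)/(1-\<alpha>))) = 2 * (H/S)/(1-\<alpha>)" by (simp add: field_simps)
        finally show ?thesis .
      qed
      have I3full: "\<bar>integral {a+h..t} D\<bar> \<le> (24/((1-\<alpha>)*Ga*Gb)) * (H/S)"
      proof -
        have "norm (integral {a+h..t} D) \<le> integral {a+h..t} b3"
          using p3b b3_int ahT ua h0
          by (intro integral_norm_bound_integral integrable_on_subinterval[OF D_int]) (auto simp: integrable_on_def)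
        also have "\<dots> = A3 * (4 * s powr (\<alpha>-2) * I3 + (2/S) * I4)" using b3_int by (rule integral_unique)
        also have "\<dots> = (4/(Ga*Gb)) * (4 * h * (s powr (\<alpha>-2) * I3) + h * ((2/S) * I4))"
          by (simp add: A3_def field_simps)
        also have "\<dots> \<le> (4/(Ga*Gb)) * (4 * h * ((1/s)/(1-\<alpha>)) + 2 * (H/S)/(1-\<alpha>))"
          using I3' I4' h0 Ga Gb by (intro mult_left_mono add_mono) auto
        also have "4 * h * ((1/s)/(1-\<alpha>)) = 4 * (h/s) / (1-\<alpha>)" by simp
        also have "4 * (h/s) / (1-\<alpha>) \<le> 4 * (H/S) / (1-\<alpha>)" using hs_le a1 by (intro divide_right_mono) auto
        hence "(4/(Ga*Gb)) * (4 * (h/s) / (1-\<alpha>) + 2 * (H/S)/(1-\<alpha>)) \<le> (4/(Ga*Gb)) * (4 * (H/S) / (1-\<alpha>) + 2 * (H/S)/(1-\<alpha>))"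
          using Ga Gb by (intro mult_left_mono add_mono) auto
        also have "\<dots> = (24/((1-\<alpha>)*Ga*Gb)) * (H/S)" using a1 by (simp add: field_simps)
        finally show ?thesis by simp
      qed
      have "\<bar>integral {u..t} F - 1\<bar> \<le> \<bar>integral {u..a} D\<bar> + \<bar>integral {a..a+h} D\<bar> + \<bar>integral {a+h..t} D\<bar>"
        unfolding ID split by linarith
      also have "\<dots> \<le> (2/(\<alpha>*Ga*Gb)) * (H/S) + (2/Gb) * h * Kd * (1/S) + (24/((1-\<alpha>)*Ga*Gb)) * (H/S)"
        using I1 I2 I3full by linarith
      also have "\<dots> = (2/(\<alpha>*Ga*Gb) + 24/((1-\<alpha>)*Ga*Gb)) * m1 + (2/Gb) * h * Kd * m2"
        by (simp add: m1e m2e algebra_simps)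
      also have "\<dots> \<le> C0 * m1 + C0 * h * Kd * m2"
      proof (rule add_mono)
        show "(2/(\<alpha>*Ga*Gb) + 24/((1-\<alpha>)*Ga*Gb)) * m1 \<le> C0 * m1" using C0(4) m1 by (rule mult_right_mono)
        have "0 \<le> h * Kd * m2" using h0 Kd0 m2 by simp
        from mult_right_mono[OF C0(5) this] show "(2/Gb) * h * Kd * m2 \<le> C0 * h * Kd * m2" by (simp add: mult_ac)
      qed
      finally show ?thesis .


    qed
  qed
  show ?thesis using goal gh_eq chid by (simp add: m1_def m2_def s_def Kd_def)
qed

theorem mainTheorem3:
  fixes T \<alpha> :: real
  assumes "T > 0" and "1/2 < \<alpha>" and "\<alpha> < 1"
  shows "\<exists>C>0. \<forall>h u t. 0 < h \<and> h \<le> 1 \<and> 0 \<le> u \<and> u < t \<and> t \<le> T \<longrightarrow>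
           \<bar>gh \<alpha> h t u - 1\<bar> \<le>
             C * min ((h / (t - u)) powr \<alpha>) 1
             + C * h * Kker \<alpha> (h - chi h u) * min ((1 / (t - u)) powr \<alpha>) ((1 / h) powr \<alpha>)"
proof -
  have a0: "0 < \<alpha>" using assms by simp
  define Ga where "Ga = Gamma \<alpha>"
  define Gb where "Gb = Gamma (1-\<alpha>)"
  define C0 where "C0 = 4 + 4/((1-\<alpha>)*Gb) + 2/Gb + 2/(\<alpha>*Ga*Gb) + 24/((1-\<alpha>)*Ga*Gb)"
  have Ga: "Ga > 0" unfolding Ga_def using a0 by (intro Gamma_real_pos)
  have Gb: "Gb > 0" unfolding Gb_def using assms by (intro Gamma_real_pos) simp
  have "C0 > 0" unfolding C0_def using Ga Gb a0 assms
    by (intro add_pos_nonneg) (auto intro!: add_nonneg_nonneg)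
  moreover have "\<forall>h u t. 0 < h \<and> h \<le> 1 \<and> 0 \<le> u \<and> u < t \<and> t \<le> T \<longrightarrow>
           \<bar>gh \<alpha> h t u - 1\<bar> \<le>
             C0 * min ((h / (t - u)) powr \<alpha>) 1
             + C0 * h * Kker \<alpha> (h - chi h u) * min ((1 / (t - u)) powr \<alpha>) ((1 / h) powr \<alpha>)"
    using main_bound[OF a0 assms(3)] unfolding C0_def Ga_def Gb_def by blast
  ultimately show ?thesis by blast
qed

end
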